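(* For every integer $p\ge0$, $$\sum_{k=1}^\infty\frac{1}{(6k-1)(6k)^{2p+1}(6k+1)}-\frac12\left(\sum_{k=1}^\infty\frac{1}{(6k+1)(6k+2)^{2p+1}(6k+3)}+\sum_{k=1}^\infty\frac{1}{(6k+3)(6k+4)^{2p+1}(6k+5)}\right)$$ $$=\frac13\cdot\frac{1}{2^{2p+2}}+\frac1{15}\cdot\frac{1}{2^{4p+3}}-\frac12+\frac38\ln 3+\frac14\sum_{j=1}^p\frac{1-3^{-2j}}{2^{2j}}\zeta(2j+1),$$ and $$\sum_{k=0}^\infty\frac{1}{(6k+1)(6k+2)^{2p+1}(6k+3)}-\sum_{k=0}^\infty\frac{1}{(6k+3)(6k+4)^{2p+1}(6k+5)}=\frac{\sqrt3\,\pi}{36}-\frac{\sqrt3}{3}\sum_{j=1}^p\frac{(-1)^{j+1}\pi^{2j+1}}{(2j+1)!}B_{2j+1}(1/3).$$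
   Context: $\zeta$ is the Riemann zeta function; $B_n(y)$ are the Bernoulli polynomials, defined by $\frac{te^{yt}}{e^t-1}=\sum_{k\ge0}B_k(y)\frac{t^k}{k!}$. Empty sums are $0$. *)

theory Defs
  imports "HOL-Analysis.Analysis" "HOL-Computational_Algebra.Formal_Power_Series"
begin

text \<open>Riemann zeta function at integer arguments s, via its Dirichlet series
  (only used here at s = 2j+1 >= 3, where the series converges).\<close>
definition riemann_zeta :: "nat \<Rightarrow> real" where
  "riemann_zeta s = (\<Sum>k. 1 / real (k + 1) ^ s)"

definition bernpoly :: "nat \<Rightarrow> real \<Rightarrow> real" where
  "bernpoly n y = fact n * fps_nth (fps_X * fps_exp y / (fps_exp 1 - 1)) n"

end

theory Submission
  imports Defs "HOL-Complex_Analysis.Complex_Analysis" "HOL-Real_Asymp.Real_Asymp"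
begin

lemma Digamma_reflection:
  fixes z :: complex
  assumes z1: "z \<notin> \<int>\<^sub>\<le>\<^sub>0" and z2: "1 - z \<notin> \<int>\<^sub>\<le>\<^sub>0"
  shows "Digamma (1 - z) - Digamma z = of_real pi * cot (of_real pi * z)"
proof -
  have G1: "Gamma z \<noteq> 0" "Gamma (1 - z) \<noteq> 0" using z1 z2 by (auto simp: Gamma_eq_zero_iff)
  have refl: "\<And>w::complex. Gamma w * Gamma (1 - w) = of_real pi / sin (of_real pi * w)"
    by (rule Gamma_reflection_complex)
  have sn: "sin (of_real pi * z) \<noteq> 0"
    using refl[of z] G1 by auto
  have dl: "((\<lambda>w::complex. 1 - w) has_field_derivative -1) (at z)"
    by (auto intro!: derivative_eq_intros)
  have dG2: "((\<lambda>w. Gamma (1 - w)) has_field_derivative Gamma (1 - z) * Digamma (1 - z) * (-1)) (at z)"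
    by (rule DERIV_chain2[OF has_field_derivative_Gamma[OF z2] dl])
  have d1: "((\<lambda>w. Gamma w * Gamma (1 - w)) has_field_derivative
     (Gamma z * Digamma z * Gamma (1 - z) + Gamma z * (Gamma (1 - z) * Digamma (1 - z) * (-1)))) (at z)"
    by (intro derivative_eq_intros has_field_derivative_Gamma[OF z1] dG2) (use z1 z2 in auto)
  have d2: "((\<lambda>w. of_real pi / sin (of_real pi * w)) has_field_derivative
     (- (of_real pi * (cos (of_real pi * z) * of_real pi)) / (sin (of_real pi * z))^2)) (at z)"
    using sn by (auto intro!: derivative_eq_intros simp: power2_eq_square)
  have "(\<lambda>w::complex. Gamma w * Gamma (1 - w)) = (\<lambda>w. of_real pi / sin (of_real pi * w))"
    using refl by auto
  with d1 d2 have eq: "Gamma z * Digamma z * Gamma (1 - z) + Gamma z * (Gamma (1 - z) * Digamma (1 - z) * (-1))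
     = - (of_real pi * (cos (of_real pi * z) * of_real pi)) / (sin (of_real pi * z))^2"
    using DERIV_unique by metis
  have "Gamma z * Gamma (1 - z) * (Digamma (1 - z) - Digamma z) = 
        of_real pi / sin (of_real pi * z) * (of_real pi * cot (of_real pi * z))"
    using eq sn by (simp add: cot_def field_simps power2_eq_square)
  with refl[of z] G1 show ?thesis by auto
qed

lemma sin_pi_nonzero:
  fixes z :: complex
  assumes z1: "z \<notin> \<int>\<^sub>\<le>\<^sub>0" and z2: "1 - z \<notin> \<int>\<^sub>\<le>\<^sub>0"
  shows "sin (of_real pi * z) \<noteq> 0"
proof -
  have G1: "Gamma z \<noteq> 0" "Gamma (1 - z) \<noteq> 0" using z1 z2 by (auto simp: Gamma_eq_zero_iff)
  then show ?thesis using Gamma_reflection_complex[of z] by auto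
qed

lemma Re_pos_not_nonpos_Ints: "Re (w::complex) > 0 \<Longrightarrow> w \<notin> \<int>\<^sub>\<le>\<^sub>0"
  by (auto elim!: nonpos_Ints_cases)

lemma cot_sum_identity:
  fixes A B :: complex
  assumes "sin A \<noteq> 0" "sin B \<noteq> 0" "sin (A + B) = of_real (sqrt 3 / 2)" "cos (A + B) = - 1/2"
  shows "(cot A + cot B) * (1 + 2 * cos (A - B)) = of_real (2 * sqrt 3)"
proof -
  have e1: "sin A * cos B + cos A * sin B = of_real (sqrt 3 / 2)" using assms(3) by (simp add: sin_add)
  have e2: "cos A * cos B - sin A * sin B = - 1/2" using assms(4) by (simp add: cos_add)
  have q: "1 + 2 * (cos A * cos B + sin A * sin B) = 4 * (sin A * sin B)"
  proof -
    have c: "cos A * cos B = sin A * sin B - 1/2" using e2 by (simp add: diff_eq_eq)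
    have "1 + 2 * (cos A * cos B + sin A * sin B) = 1 + 2 * ((sin A * sin B - 1/2) + sin A * sin B)"
      by (simp only: c)
    also have "\<dots> = 4 * (sin A * sin B)" by (simp add: algebra_simps)
    finally show ?thesis .
  qed
  have "(cot A + cot B) * (1 + 2 * cos (A - B)) = 
     (sin A * cos B + cos A * sin B) * (1 + 2 * (cos A * cos B + sin A * sin B)) / (sin A * sin B)"
    using assms(1,2) by (simp add: cot_def cos_diff field_simps)
  also have "\<dots> = (sin A * cos B + cos A * sin B) * (4 * (sin A * sin B)) / (sin A * sin B)"
    by (simp only: q)
  also have "\<dots> = (sin A * cos B + cos A * sin B) * 4" using assms(1,2) by simp
  also have "\<dots> = of_real (sqrt 3 / 2) * 4" by (simp only: e1)
  finally show ?thesis by simp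
qed

definition Psi :: "complex \<Rightarrow> complex" where
  "Psi t = Digamma (2/3 - t/3) - Digamma (1/3 - t/3) + Digamma (2/3 + t/3) - Digamma (1/3 + t/3)"

lemma Psi_identity:
  assumes t: "norm t < 1"
  shows "Psi t * (1 + 2 * cos (of_real (2*pi/3) * t)) = of_real (2 * sqrt 3 * pi)"
proof -
  have re: "\<bar>Re t\<bar> < 1" using t abs_Re_le_cmod[of t] by linarith
  define z1 where "z1 = 1/3 + t/3"
  define z2 where "z2 = 1/3 - t/3"
  have nz: "z1 \<notin> \<int>\<^sub>\<le>\<^sub>0" "1 - z1 \<notin> \<int>\<^sub>\<le>\<^sub>0" "z2 \<notin> \<int>\<^sub>\<le>\<^sub>0" "1 - z2 \<notin> \<int>\<^sub>\<le>\<^sub>0"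
    using re by (auto intro!: Re_pos_not_nonpos_Ints simp: z1_def z2_def)
  have r1: "Digamma (2/3 - t/3) - Digamma (1/3 + t/3) = of_real pi * cot (of_real pi * z1)"
    using Digamma_reflection[OF nz(1,2)] by (simp add: z1_def algebra_simps)
  have r2: "Digamma (2/3 + t/3) - Digamma (1/3 - t/3) = of_real pi * cot (of_real pi * z2)"
    using Digamma_reflection[OF nz(3,4)] by (simp add: z2_def algebra_simps)
  have "Psi t = of_real pi * (cot (of_real pi * z1) + cot (of_real pi * z2))"
    using r1 r2 unfolding Psi_def by (simp add: algebra_simps)
  moreover have "(cot (of_real pi * z1) + cot (of_real pi * z2)) * (1 + 2 * cos (of_real pi * z1 - of_real pi * z2))
       = of_real (2 * sqrt 3)"
  proof (rule cot_sum_identity)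
    show "sin (of_real pi * z1) \<noteq> 0" "sin (of_real pi * z2) \<noteq> 0"
      using sin_pi_nonzero nz by auto
    have s: "of_real pi * z1 + of_real pi * z2 = of_real (pi - pi/3)"
      by (simp add: z1_def z2_def field_simps)
    show "sin (of_real pi * z1 + of_real pi * z2) = of_real (sqrt 3 / 2)"
      unfolding s sin_of_real sin_pi_minus sin_60 by simp
    show "cos (of_real pi * z1 + of_real pi * z2) = - 1/2"
      unfolding s cos_of_real cos_pi_minus cos_60 by simp
  qed
  moreover have "of_real pi * z1 - of_real pi * z2 = of_real (2*pi/3) * t"
    by (simp add: z1_def z2_def field_simps)
  ultimately have "Psi t * (1 + 2 * cos (of_real (2*pi/3) * t)) = of_real pi * of_real (2 * sqrt 3)"
    by (metis mult.assoc)
  then show ?thesis by simp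
qed

lemma Dig_lin_holo:
  assumes "\<And>t. t \<in> S \<Longrightarrow> Re (u * t + a) > 0"
  shows "(\<lambda>t. Digamma (u * t + a)) holomorphic_on S"
proof -
  have "\<And>t. t \<in> S \<Longrightarrow> u * t + a \<notin> \<int>\<^sub>\<le>\<^sub>0"
    using assms Re_pos_not_nonpos_Ints by blast
  then have "Digamma holomorphic_on ((\<lambda>t. u * t + a) ` S)"
    by (intro holomorphic_on_Polygamma) blast
  moreover have "(\<lambda>t. u * t + a) holomorphic_on S" by (intro holomorphic_intros)
  ultimately show ?thesis using holomorphic_on_compose[of "\<lambda>t. u * t + a" S Digamma]
    by (simp add: o_def)
qed

lemma Dig_lin_hderiv:
  assumes "\<And>t. t \<in> ball 0 1 \<Longrightarrow> Re (u * t + a) > 0"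
  shows "(deriv ^^ n) (\<lambda>t. Digamma (u * t + a)) 0 = u ^ n * Polygamma n a"
proof -
  have T: "open {w::complex. Re w > 0}" by (simp add: open_halfspace_Re_gt)
  have h: "Digamma holomorphic_on {w. Re w > 0}"
    by (intro holomorphic_on_Polygamma) (auto dest!: Re_pos_not_nonpos_Ints)
  have "(deriv ^^ n) (\<lambda>t. Digamma (u * t + a)) 0 = u ^ n * (deriv ^^ n) Digamma (u * 0 + a)"
    by (rule higher_deriv_compose_linear'[OF h open_ball[of 0 1] T]) (use assms in auto)
  also have "(deriv ^^ n) Digamma (u * 0 + a) = Polygamma n a"
    using higher_deriv_Polygamma[of a n 0] assms[of 0] Re_pos_not_nonpos_Ints[of a] by simp
  finally show ?thesis .
qed

lemma re_bound: "t \<in> ball (0::complex) 1 \<Longrightarrow> \<bar>Re t\<bar> < 1"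
  using abs_Re_le_cmod[of t] by auto

lemma Psi_alt: "Psi = (\<lambda>t. ((Digamma ((-1/3) * t + 2/3) - Digamma ((-1/3) * t + 1/3))
      + Digamma ((1/3) * t + 2/3)) - Digamma ((1/3) * t + 1/3))"
  by (auto simp: Psi_def algebra_simps fun_eq_iff)

lemma Psi_holo: "Psi holomorphic_on ball 0 1"
  unfolding Psi_alt
proof (intro holomorphic_intros Dig_lin_holo)
  fix t assume "t \<in> ball (0::complex) 1"
  then have "\<bar>Re t\<bar> < 1" by (rule re_bound)
  then show "0 < Re ((-1/3) * t + 2/3)" "0 < Re ((-1/3) * t + 1/3)" "0 < Re ((1/3) * t + 2/3)"
    "0 < Re ((1/3) * t + 1/3)" by auto
qed

lemma Psi_hderiv:
  "(deriv ^^ n) Psi 0 = (-1/3)^n * Polygamma n (2/3) - (-1/3)^n * Polygamma n (1/3)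
     + (1/3)^n * Polygamma n (2/3) - (1/3)^n * Polygamma n (1/3)"
proof -
  have h: "\<And>u a. (\<And>t. t \<in> ball 0 1 \<Longrightarrow> Re (u * t + a) > 0) \<Longrightarrow>
     (\<lambda>t. Digamma (u * t + a)) holomorphic_on ball 0 1" by (rule Dig_lin_holo)
  have pos: "\<And>t. t \<in> ball 0 1 \<Longrightarrow> Re ((-1/3) * t + 2/3) > 0 \<and> Re ((-1/3) * t + 1/3) > 0
      \<and> Re ((1/3) * t + 2/3) > 0 \<and> Re ((1/3) * t + 1/3) > 0"
  proof -
    fix t assume "t \<in> ball (0::complex) 1"
    then have "\<bar>Re t\<bar> < 1" by (rule re_bound)
    then show "?thesis t" by auto
  qed
  have h1: "(\<lambda>t. Digamma ((-1/3) * t + 2/3)) holomorphic_on ball 0 1" using pos by (intro h) auto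
  have h2: "(\<lambda>t. Digamma ((-1/3) * t + 1/3)) holomorphic_on ball 0 1" using pos by (intro h) auto
  have h3: "(\<lambda>t. Digamma ((1/3) * t + 2/3)) holomorphic_on ball 0 1" using pos by (intro h) auto
  have h4: "(\<lambda>t. Digamma ((1/3) * t + 1/3)) holomorphic_on ball 0 1" using pos by (intro h) auto
  have "(deriv ^^ n) Psi 0 = (deriv ^^ n) (\<lambda>t. Digamma ((-1/3) * t + 2/3)) 0
      - (deriv ^^ n) (\<lambda>t. Digamma ((-1/3) * t + 1/3)) 0
      + (deriv ^^ n) (\<lambda>t. Digamma ((1/3) * t + 2/3)) 0
      - (deriv ^^ n) (\<lambda>t. Digamma ((1/3) * t + 1/3)) 0"
    unfolding Psi_alt
    apply (subst higher_deriv_diff[OF _ h4 open_ball])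
      apply (intro holomorphic_intros h1 h2 h3)
     apply simp
    apply (subst higher_deriv_add[OF _ h3 open_ball])
      apply (intro holomorphic_intros h1 h2)
     apply simp
    apply (subst higher_deriv_diff[OF h1 h2 open_ball])
     apply simp
    apply simp
    done
  also have "\<dots> = (-1/3)^n * Polygamma n (2/3) - (-1/3)^n * Polygamma n (1/3)
     + (1/3)^n * Polygamma n (2/3) - (1/3)^n * Polygamma n (1/3)"
    using pos by (subst (1 2 3 4) Dig_lin_hderiv) auto
  finally show ?thesis .
qed

definition Lser :: "nat \<Rightarrow> real" where
  "Lser j = (\<Sum>k. 1 / (3 * real k + 1) ^ (2*j+1) - 1 / (3 * real k + 2) ^ (2*j+1))"

lemma Polygamma_diff_real:
  assumes j: "j \<ge> 1"
  shows "Polygamma (2*j) (2/3::real) - Polygamma (2*j) (1/3) = fact (2*j) * 3^(2*j+1) * Lser j"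
proof -
  define s where "s = 2*j+1"
  have s2: "s \<ge> 2" using j by (simp add: s_def)
  have P: "\<And>x::real. Polygamma (2*j) x = - fact (2*j) * (\<Sum>k. inverse ((x + of_nat k) ^ s))"
    using j by (simp add: Polygamma_def s_def)
  have sm: "\<And>x::real. x \<noteq> 0 \<Longrightarrow> summable (\<lambda>k. inverse ((x + of_nat k) ^ s))"
    using Polygamma_converges' s2 by blast
  have eq: "(\<lambda>k. inverse ((1/3 + of_nat k) ^ s) - inverse ((2/3 + of_nat k) ^ s)) =
        (\<lambda>k. 3^s * (1 / (3 * real k + 1) ^ s - 1 / (3 * real k + 2) ^ s))"
  proof
    fix k
    have a: "(1/3 + real k) = (3 * real k + 1) / 3" "(2/3 + real k) = (3 * real k + 2) / 3" by auto
    show "inverse ((1/3 + of_nat k) ^ s) - inverse ((2/3 + of_nat k) ^ s) =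
        3^s * (1 / (3 * real k + 1) ^ s - 1 / (3 * real k + 2) ^ s)"
      unfolding of_nat_id a power_divide by (simp add: field_simps)
  qed
  have sd: "summable (\<lambda>k. inverse ((1/3 + of_nat k) ^ s) - inverse ((2/3 + of_nat k) ^ s) :: real)"
    by (intro summable_diff sm) auto
  have "(\<Sum>k. inverse ((1/3 + of_nat k) ^ s)) - (\<Sum>k. inverse ((2/3 + of_nat k) ^ s) :: real)
      = (\<Sum>k. inverse ((1/3 + of_nat k) ^ s) - inverse ((2/3 + of_nat k) ^ s))"
    by (rule suminf_diff; rule sm; simp)
  also have "\<dots> = (\<Sum>k. 3^s * (1 / (3 * real k + 1) ^ s - 1 / (3 * real k + 2) ^ s))"
    unfolding eq ..
  also have "\<dots> = 3^s * Lser j"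
  proof -
    have "summable (\<lambda>k. 3^s * (1 / (3 * real k + 1) ^ s - 1 / (3 * real k + 2) ^ s))"
      using sd unfolding eq .
    then have "summable (\<lambda>k. (1 / (3 * real k + 1) ^ s - 1 / (3 * real k + 2) ^ s))"
      using summable_cmult_iff[of "3^s"] by simp
    then show ?thesis unfolding Lser_def s_def[symmetric] by (rule suminf_mult)
  qed
  finally show ?thesis unfolding P s_def by (simp add: algebra_simps)
qed

lemma Psi_fps: "Psi has_fps_expansion fps_expansion Psi 0"
  by (rule has_fps_expansion_fps_expansion[OF open_ball _ Psi_holo]) auto

lemma Psi_coeff:
  assumes j: "j \<ge> 1"
  shows "fps_nth (fps_expansion Psi 0) (2*j) = of_real (6 * Lser j)"
proof -
  have "fps_nth (fps_expansion Psi 0) (2*j) = (deriv ^^ (2*j)) Psi 0 / fact (2*j)"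
    by (rule fps_nth_fps_expansion[OF Psi_fps])
  also have "(deriv ^^ (2*j)) Psi 0 = 2 * (1/9)^j * (Polygamma (2*j) (2/3) - Polygamma (2*j) (1/3))"
  proof -
    have a: "(-1/3::complex)^(2*j) = (1/9)^j" "(1/3::complex)^(2*j) = (1/9)^j"
      by (simp_all add: power_mult power2_eq_square)
    show ?thesis unfolding Psi_hderiv a by (simp add: algebra_simps)
  qed
  also have "Polygamma (2*j) (2/3::complex) - Polygamma (2*j) (1/3) =
      of_real (Polygamma (2*j) (2/3::real) - Polygamma (2*j) (1/3))"
  proof -
    have "Polygamma (2*j) (of_real (2/3) :: complex) = of_real (Polygamma (2*j) (2/3))"
      by (rule Polygamma_of_real) simp
    moreover have "Polygamma (2*j) (of_real (1/3) :: complex) = of_real (Polygamma (2*j) (1/3))"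
      by (rule Polygamma_of_real) simp
    ultimately show ?thesis by simp
  qed
  also have "\<dots> = of_real (fact (2*j) * 3^(2*j+1) * Lser j)"
    using Polygamma_diff_real[OF j] by simp
  finally have X: "fps_nth (fps_expansion Psi 0) (2*j) =
     2 * (1/9)^j * of_real (fact (2*j) * 3^(2*j+1) * Lser j) / fact (2*j)" .
  have r9: "(3::real)^(2*j+1) = 3 * 9^j" by (simp add: power_mult)
  show ?thesis unfolding X r9 by (simp add: field_simps)
qed

lemma Psi_W:
  "fps_expansion Psi 0 * (1 + fps_const 2 * fps_cos (of_real (2*pi/3))) =
     fps_const (of_real (2 * sqrt 3 * pi))"
proof -
  define c where "c = (of_real (2*pi/3) :: complex)"
  have e2: "(\<lambda>t. 1 + 2 * cos (c * t)) has_fps_expansion (1 + fps_const 2 * fps_cos c)"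
    by (intro fps_expansion_intros)
  have e3: "(\<lambda>t. Psi t * (1 + 2 * cos (c * t))) has_fps_expansion
       fps_expansion Psi 0 * (1 + fps_const 2 * fps_cos c)"
    by (rule has_fps_expansion_mult[OF Psi_fps e2])
  have "eventually (\<lambda>t. t \<in> ball (0::complex) 1) (nhds 0)"
    by (intro eventually_nhds_in_open) auto
  then have ev: "eventually (\<lambda>t. Psi t * (1 + 2 * cos (c * t)) = of_real (2 * sqrt 3 * pi)) (nhds 0)"
    by eventually_elim (use Psi_identity in \<open>auto simp: c_def\<close>)
  have "(\<lambda>t. of_real (2 * sqrt 3 * pi)) has_fps_expansion
       fps_expansion Psi 0 * (1 + fps_const 2 * fps_cos c)"
    using has_fps_expansion_cong[OF ev refl] e3 by simp
  moreover have "(\<lambda>t. of_real (2 * sqrt 3 * pi)) has_fps_expansion fps_const (of_real (2 * sqrt 3 * pi) :: complex)"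
    by simp
  ultimately show ?thesis unfolding c_def by (rule fps_expansion_unique_complex)
qed

lemma alg_lemma:
  fixes B C u v X :: "'a::idom"
  assumes h1: "B * (u^3 - 1) = X * u" and h2: "C * (v^3 - 1) = - X * v"
    and uv: "u * v = 1" and u1: "u \<noteq> 1"
  shows "(B - C) * (1 + u + v) = - X"
proof -
  have e: "u * (u - 1) * ((B - C) * (1 + u + v) + X) = 0"
    using h1 h2 uv by algebra
  have "u \<noteq> 0" using uv by auto
  with u1 e have "(B - C) * (1 + u + v) + X = 0" by auto
  then show ?thesis by (simp add: eq_neg_iff_add_eq_0)
qed

definition sc :: "'a::comm_ring_1 \<Rightarrow> 'a fps \<Rightarrow> 'a fps" where
  "sc c f = Abs_fps (\<lambda>n. c^n * fps_nth f n)"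

lemma sc_nth [simp]: "fps_nth (sc c f) n = c^n * fps_nth f n"
  by (simp add: sc_def)

lemma sc_mult: "sc c (f * g) = sc c f * sc c g"
proof (rule fps_ext)
  fix n
  have "fps_nth (sc c (f * g)) n = (\<Sum>i=0..n. c^n * (fps_nth f i * fps_nth g (n - i)))"
    by (simp add: fps_mult_nth sum_distrib_left)
  also have "\<dots> = (\<Sum>i=0..n. (c^i * fps_nth f i) * (c^(n-i) * fps_nth g (n - i)))"
  proof (rule sum.cong)
    fix i assume "i \<in> {0..n}"
    then have "c^n = c^i * c^(n-i)" by (simp add: power_add[symmetric])
    then show "c^n * (fps_nth f i * fps_nth g (n - i)) = (c^i * fps_nth f i) * (c^(n-i) * fps_nth g (n - i))"
      by (simp add: algebra_simps)
  qed simp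
  also have "\<dots> = fps_nth (sc c f * sc c g) n" by (simp add: fps_mult_nth)
  finally show "fps_nth (sc c (f * g)) n = fps_nth (sc c f * sc c g) n" .
qed

lemma sc_add: "sc c (f + g) = sc c f + sc c g"
  by (rule fps_ext) (simp add: algebra_simps)
lemma sc_diff: "sc c (f - g) = sc c f - sc c g"
  by (rule fps_ext) (simp add: algebra_simps)
lemma sc_uminus: "sc c (- f) = - sc c f"
  by (rule fps_ext) simp
lemma sc_1: "sc c 1 = 1"
  by (rule fps_ext) simp
lemma sc_X: "sc c fps_X = fps_const c * fps_X"
  by (rule fps_ext) (simp add: fps_X_def)
lemma sc_exp: "sc c (fps_exp a) = fps_exp (c * (a::'a::field_char_0))"
  by (rule fps_ext) (simp add: power_mult_distrib)

definition cf :: "real fps \<Rightarrow> complex fps" where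
  "cf f = Abs_fps (\<lambda>n. of_real (fps_nth f n))"

lemma cf_nth [simp]: "fps_nth (cf f) n = of_real (fps_nth f n)"
  by (simp add: cf_def)
lemma cf_mult: "cf (f * g) = cf f * cf g"
  by (rule fps_ext) (simp add: fps_mult_nth)
lemma cf_add: "cf (f + g) = cf f + cf g"
  by (rule fps_ext) simp
lemma cf_diff: "cf (f - g) = cf f - cf g"
  by (rule fps_ext) simp
lemma cf_uminus: "cf (- f) = - cf f"
  by (rule fps_ext) simp
lemma cf_1: "cf 1 = 1"
  by (rule fps_ext) simp
lemma cf_X: "cf fps_X = fps_X"
  by (rule fps_ext) (simp add: fps_X_def)
lemma cf_exp: "cf (fps_exp a) = fps_exp (of_real a)"
  by (rule fps_ext) simp

lemma bern_odd_identity: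
  defines "Bf \<equiv> fps_X * fps_exp (1/3) / (fps_exp 1 - 1) :: real fps"
  shows "(Bf - sc (-1) Bf) * (1 + fps_exp (1/3) + fps_exp (-1/3)) = - fps_X"
proof -
  define u where "u = (fps_exp (1/3) :: real fps)"
  define v where "v = (fps_exp (-1/3) :: real fps)"
  have g1: "fps_nth (fps_exp 1 - 1 :: real fps) 1 = 1" by simp
  have gnz: "(fps_exp 1 - 1 :: real fps) \<noteq> 0" using g1 by (metis fps_zero_nth zero_neq_one)
  have sg: "subdegree (fps_exp 1 - 1 :: real fps) \<le> 1" using g1 by (intro subdegree_leI) simp
  have sf: "subdegree (fps_X * fps_exp (1/3) :: real fps) = 1"
    by (subst subdegree_mult) (auto simp: subdegree_eq_0_iff)
  have h0: "Bf * (fps_exp 1 - 1) = fps_X * u"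
    unfolding Bf_def u_def by (rule fps_times_divide_eq[OF gnz]) (use sg sf in simp)
  have u3: "u^3 = fps_exp 1" unfolding u_def fps_exp_power_mult by simp
  have v3: "v^3 = fps_exp (-1)" unfolding v_def fps_exp_power_mult by simp
  have uv: "u * v = 1" unfolding u_def v_def fps_exp_add_mult[symmetric] by simp
  have u1: "u \<noteq> 1"
  proof
    assume "u = 1"
    then have "fps_nth u 1 = fps_nth 1 1" by simp
    then show False unfolding u_def by simp
  qed
  have h1: "Bf * (u^3 - 1) = fps_X * u" using h0 u3 by simp
  have "sc (-1) (Bf * (fps_exp 1 - 1)) = sc (-1) (fps_X * u)" using h0 by simp
  then have h2': "sc (-1) Bf * (fps_exp (-1) - 1) = - fps_X * v"
    unfolding sc_mult sc_diff sc_1 sc_exp sc_X u_def v_def by (simp add: fps_const_neg[symmetric])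
  have h2: "sc (-1) Bf * (v^3 - 1) = - fps_X * v" using h2' v3 by simp
  show ?thesis using alg_lemma[OF h1 h2 uv u1] unfolding u_def v_def .
qed

lemma alg2:
  fixes X P K S W cc :: "'a::comm_ring_1"
  assumes "P * W = K" "S * W = - (cc * X)"
  shows "(X * P * (- cc) - K * S) * W = 0"
proof -
  have "(X * P * (- cc) - K * S) * W = X * (- cc) * (P * W) - K * (S * W)" by (simp add: algebra_simps)
  also have "\<dots> = X * (- cc) * K - K * (- (cc * X))" by (simp only: assms)
  also have "\<dots> = 0" by (simp add: algebra_simps)
  finally show ?thesis .
qed

lemma L_formula:
  assumes j: "j \<ge> 1"
  shows "Lser j = 2 * sqrt 3 * pi / 3 * (2*pi)^(2*j) * (-1)^(j+1) * (bernpoly (2*j+1) (1/3) / fact (2*j+1))"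
proof -
  define Bf where "Bf = (fps_X * fps_exp (1/3) / (fps_exp 1 - 1) :: real fps)"
  define b where "b = fps_nth Bf (2*j+1)"
  have b_eq: "b = bernpoly (2*j+1) (1/3) / fact (2*j+1)"
    by (simp add: b_def Bf_def bernpoly_def)
  define c where "c = (of_real (2*pi) * \<i> :: complex)"
  define W where "W = (1 + fps_const 2 * fps_cos (of_real (2*pi/3)) :: complex fps)"
  define D where "D = cf (Bf - sc (-1) Bf)"
  have a1: "\<i> * of_real (2*pi/3) = c * of_real (1/3)" by (simp add: c_def)
  have a2: "- \<i> * of_real (2*pi/3) = c * of_real (-1/3)" by (simp add: c_def)
  have hW: "W = 1 + fps_exp (c * of_real (1/3)) + fps_exp (c * of_real (-1/3))"
    unfolding W_def fps_cos_fps_exp_ii a1 a2 divide_fps_const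
    by (simp add: mult.assoc[symmetric] fps_const_mult[symmetric] del: fps_const_mult)
  have DW: "sc c D * W = - (fps_const c * fps_X)"
  proof -
    have "cf ((Bf - sc (-1) Bf) * (1 + fps_exp (1/3) + fps_exp (-1/3))) = cf (- fps_X)"
      using bern_odd_identity unfolding Bf_def by simp
    then have "D * (1 + fps_exp (of_real (1/3)) + fps_exp (of_real (-1/3))) = - fps_X"
      unfolding D_def cf_mult cf_add cf_1 cf_exp cf_uminus cf_X .
    then have "sc c (D * (1 + fps_exp (of_real (1/3)) + fps_exp (of_real (-1/3)))) = sc c (- fps_X)"
      by simp
    then show ?thesis unfolding sc_mult sc_add sc_1 sc_exp sc_uminus sc_X hW .
  qed
  have PW: "fps_expansion Psi 0 * W = fps_const (of_real (2 * sqrt 3 * pi))"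
    unfolding W_def by (rule Psi_W)
  have "W \<noteq> 0"
  proof
    assume "W = 0"
    then have "fps_nth W 0 = 0" by simp
    then show False unfolding W_def by simp
  qed
  have "(fps_X * fps_expansion Psi 0 * fps_const (- c) - fps_const (of_real (2 * sqrt 3 * pi)) * sc c D) * W = 0"
  proof -
    have n: "fps_const (-c) = - fps_const c" by simp
    show ?thesis unfolding n by (rule alg2[OF PW DW])
  qed
  then have Z: "fps_X * fps_expansion Psi 0 * fps_const (- c) = fps_const (of_real (2 * sqrt 3 * pi)) * sc c D"
    using \<open>W \<noteq> 0\<close> by simp
  have "fps_nth (fps_X * fps_expansion Psi 0 * fps_const (- c)) (2*j+1) =
        fps_nth (fps_const (of_real (2 * sqrt 3 * pi)) * sc c D) (2*j+1)"
    using Z by simp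
  then have "fps_nth (fps_expansion Psi 0) (2*j) * (- c) = of_real (2 * sqrt 3 * pi) * (c^(2*j+1) * of_real (2 * b))"
    by (simp add: D_def b_def)
  then have e1: "of_real (6 * Lser j) * (- c) = of_real (2 * sqrt 3 * pi) * (c^(2*j) * c * of_real (2 * b))"
    using Psi_coeff[OF j] by simp
  have cnz: "c \<noteq> 0" by (simp add: c_def)
  have c2: "c^(2*j) = of_real ((-1)^j * (2*pi)^(2*j))"
  proof -
    have ii: "\<i> ^ j * \<i> ^ j = ((-1)::complex) ^ j" by (simp add: power_mult_distrib[symmetric])
    show ?thesis by (simp add: c_def power_mult power2_eq_square power_mult_distrib ii)
  qed
  have "c * (- of_real (6 * Lser j)) = c * (of_real (2 * sqrt 3 * pi) * (c^(2*j) * of_real (2 * b)))"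
    using e1 by (simp add: algebra_simps)
  then have "- of_real (6 * Lser j) = of_real (2 * sqrt 3 * pi) * (c^(2*j) * of_real (2 * b))"
    using mult_left_cancel[OF cnz] by blast
  then have "- of_real (6 * Lser j) = (of_real ((2 * sqrt 3 * pi) * ((-1)^j * (2*pi)^(2*j)) * (2 * b)) :: complex)"
    unfolding c2 by (simp add: algebra_simps)
  then have "- (6 * Lser j) = (2 * sqrt 3 * pi) * ((-1)^j * (2*pi)^(2*j)) * (2 * b)"
    by (metis of_real_eq_iff of_real_minus)
  then show ?thesis unfolding b_eq[symmetric] by (simp add: field_simps)
qed

lemma PF:
  fixes n :: real
  assumes n: "n > 1"
  shows "1 / ((n-1) * n^(2*p+1) * (n+1)) = 1 / ((n-1) * n * (n+1)) - (\<Sum>j=1..p. 1 / n^(2*j+1))"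
proof (induction p)
  case 0 then show ?case by simp
next
  case (Suc p)
  have "1 / ((n-1) * n^(2*Suc p+1) * (n+1)) = 1 / ((n-1) * n^(2*p+1) * (n+1)) - 1 / n^(2*Suc p+1)"
  proof -
    define N where "N = n^(2*p+1)"
    define t where "t = (n-1)*(n+1)"
    have e: "n^(2*Suc p+1) = N * n^2" by (simp add: N_def power_add[symmetric])
    have pos: "N > 0" "t > 0" "n^2 > 0" using n by (auto simp: N_def t_def)
    have t1: "n^2 - t = 1" by (simp add: t_def algebra_simps power2_eq_square)
    have "1 / ((n-1) * n^(2*Suc p+1) * (n+1)) = 1 / (t * N * n^2)"
      unfolding e t_def by (simp add: algebra_simps)
    also have "\<dots> = (n^2 - t) / (t * N * n^2)" by (simp add: t1)
    also have "\<dots> = 1 / (t * N) - 1 / (N * n^2)" using pos by (simp add: field_simps)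
    also have "1 / (t * N) = 1 / ((n-1) * n^(2*p+1) * (n+1))" by (simp add: t_def N_def algebra_simps)
    also have "1 / (N * n^2) = 1 / n^(2*Suc p+1)" unfolding e ..
    finally show ?thesis .
  qed
  then show ?case using Suc by simp
qed

lemma sumZ:
  assumes r: "r > 0" and s: "s \<ge> 2"
  shows "summable (\<lambda>k. 1 / (6 * real k + r) ^ s)"
proof -
  have "summable (\<lambda>k. inverse ((r/6 + of_nat k) ^ s) :: real)"
    using Polygamma_converges'[of "r/6" s] r s by simp
  then have "summable (\<lambda>k. (1/6^s) * inverse ((r/6 + of_nat k) ^ s) :: real)"
    by (rule summable_mult)
  moreover have "(\<lambda>k. (1/6^s) * inverse ((r/6 + of_nat k) ^ s) :: real) = (\<lambda>k. 1 / (6 * real k + r) ^ s)"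
  proof
    fix k
    have "r/6 + real k = (6 * real k + r) / 6" by simp
    then show "(1/6^s) * inverse ((r/6 + of_nat k) ^ s) = 1 / (6 * real k + r) ^ s"
      by (simp add: power_divide field_simps)
  qed
  ultimately show ?thesis by (simp only:)
qed

lemma sumBase:
  assumes r: "r > 1"
  shows "summable (\<lambda>k. 1 / ((6 * real k + (r-1)) * (6 * real k + r) * (6 * real k + (r+1))))"
proof (rule summable_comparison_test'[OF sumZ[of "r-1" 3]])
  fix k :: nat
  define x where "x = 6 * real k + (r-1)"
  have x: "x > 0" using r by (simp add: x_def)
  have "x^3 \<le> x * (6 * real k + r) * (6 * real k + (r+1))"
  proof -
    have "x * x \<le> (6 * real k + r) * (6 * real k + (r+1))"
      by (rule mult_mono) (use x in \<open>auto simp: x_def\<close>)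
    then have "x * (x * x) \<le> x * ((6 * real k + r) * (6 * real k + (r+1)))"
      using x by (intro mult_left_mono) auto
    then show ?thesis by (simp add: power3_eq_cube mult.assoc)
  qed
  then show "norm (1 / ((6 * real k + (r-1)) * (6 * real k + r) * (6 * real k + (r+1)))) \<le> 1 / (6 * real k + (r-1)) ^ 3"
    using x r unfolding x_def[symmetric]
    by (simp add: frac_le abs_mult divide_simps)
qed (use r in auto)

definition Tser :: "real \<Rightarrow> nat \<Rightarrow> real" where
  "Tser r p = (\<Sum>k. 1 / ((6 * real k + (r-1)) * (6 * real k + r)^(2*p+1) * (6 * real k + (r+1))))"
definition Bser :: "real \<Rightarrow> real" where
  "Bser r = (\<Sum>k. 1 / ((6 * real k + (r-1)) * (6 * real k + r) * (6 * real k + (r+1))))"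
definition Zser :: "real \<Rightarrow> nat \<Rightarrow> real" where
  "Zser r j = (\<Sum>k. 1 / (6 * real k + r)^(2*j+1))"

lemma Tser_eq:
  assumes r: "r > 1"
  shows "Tser r p = Bser r - (\<Sum>j=1..p. Zser r j)"
proof -
  have f: "(\<lambda>k. 1 / ((6 * real k + (r-1)) * (6 * real k + r)^(2*p+1) * (6 * real k + (r+1)))) =
     (\<lambda>k. 1 / ((6 * real k + (r-1)) * (6 * real k + r) * (6 * real k + (r+1))) - (\<Sum>j=1..p. 1 / (6 * real k + r)^(2*j+1)))"
  proof
    fix k
    have "6 * real k + r > 1" using r by simp
    from PF[OF this, of p] show "1 / ((6 * real k + (r-1)) * (6 * real k + r)^(2*p+1) * (6 * real k + (r+1))) =
      1 / ((6 * real k + (r-1)) * (6 * real k + r) * (6 * real k + (r+1))) - (\<Sum>j=1..p. 1 / (6 * real k + r)^(2*j+1))"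
      by (simp add: algebra_simps)
  qed
  have sz: "\<And>j. j \<in> {1..p} \<Longrightarrow> summable (\<lambda>k. 1 / (6 * real k + r)^(2*j+1))"
    using r by (intro sumZ) auto
  have "Tser r p = Bser r - (\<Sum>k. \<Sum>j=1..p. 1 / (6 * real k + r)^(2*j+1))"
    unfolding Tser_def Bser_def f
    by (rule suminf_diff[symmetric]) (use r sz in \<open>auto intro!: sumBase summable_sum\<close>)
  also have "(\<Sum>k. \<Sum>j=1..p. 1 / (6 * real k + r)^(2*j+1)) = (\<Sum>j=1..p. Zser r j)"
    unfolding Zser_def by (rule suminf_sum) (use sz in auto)
  finally show ?thesis .
qed

lemma pf3: fixes a :: real assumes "a > 0"
  shows "1/(a*(a+1)*(a+2)) = 1/2*(1/a - 2/(a+1) + 1/(a+2))"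
proof -
  have "a \<noteq> 0" "a + 1 \<noteq> 0" "a + 2 \<noteq> 0" using assms by auto
  then show ?thesis by (simp add: divide_simps) (simp add: algebra_simps)
qed

lemma lin5: fixes A B C D E :: real
  shows "1/2*(1/A - 2/B + 1/C) - 1/2*(1/C - 2/D + 1/E) = 1/12*(6*inverse A - 6*inverse E) - 1/6*(6*inverse B - 6*inverse D)"
  unfolding divide_inverse by (simp add: ring_distribs)

lemma DigDiff:
  fixes x y :: real
  assumes x: "x > 0" and y: "y > 0"
  shows "(\<lambda>k. inverse (x + real k) - inverse (y + real k)) sums (Digamma y - Digamma x)"
proof -
  have s: "\<And>z::real. z > 0 \<Longrightarrow> (\<lambda>k. inverse (of_nat (Suc k)) - inverse (z + of_nat k)) sums (Digamma z + euler_mascheroni)"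
  proof -
    fix z :: real assume z: "z > 0"
    have "summable (\<lambda>k. inverse (of_nat (Suc k)) - inverse (z + of_nat k))"
      using summable_Digamma[of z] z by simp
    then show "(\<lambda>k. inverse (of_nat (Suc k)) - inverse (z + of_nat k)) sums (Digamma z + euler_mascheroni)"
      by (simp add: Digamma_def summable_sums)
  qed
  from sums_diff[OF s[OF y] s[OF x]] show ?thesis by simp
qed

lemma Dig_refl_real:
  fixes x :: real
  assumes x: "0 < x" "x < 1"
  shows "Digamma (1 - x) - Digamma x = pi * cot (pi * x)"
proof -
  have z1: "(of_real x :: complex) \<notin> \<int>\<^sub>\<le>\<^sub>0" "1 - (of_real x :: complex) \<notin> \<int>\<^sub>\<le>\<^sub>0"
    using x by (auto intro!: Re_pos_not_nonpos_Ints)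
  have "Digamma (1 - of_real x) - Digamma (of_real x) = of_real pi * cot (of_real pi * (of_real x :: complex))"
    by (rule Digamma_reflection[OF z1])
  moreover have "Digamma (1 - of_real x) = (of_real (Digamma (1 - x)) :: complex)"
    using Polygamma_of_real[of "1 - x" 0] x by simp
  moreover have "Digamma (of_real x) = (of_real (Digamma x) :: complex)"
    using Polygamma_of_real[of x 0] x by simp
  moreover have "cot (of_real pi * (of_real x :: complex)) = of_real (cot (pi * x))"
    by (simp add: cot_def sin_of_real[symmetric] cos_of_real[symmetric])
  ultimately have "(of_real (Digamma (1 - x) - Digamma x) :: complex) = of_real (pi * cot (pi * x))"
    by simp
  then show ?thesis using of_real_eq_iff by blast
qed

lemma base2: "Bser 2 - Bser 4 = sqrt 3 * pi / 36"
proof -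
  have sb: "summable (\<lambda>k. 1 / ((6 * real k + (r-1)) * (6 * real k + r) * (6 * real k + (r+1))))" if "r > 1" for r :: real
    using sumBase that by blast
  have "Bser 2 - Bser 4 = (\<Sum>k. 1 / ((6 * real k + (2-1)) * (6 * real k + 2) * (6 * real k + (2+1)))
       - 1 / ((6 * real k + (4-1)) * (6 * real k + 4) * (6 * real k + (4+1))))"
  proof -
    have s2: "summable (\<lambda>k. 1 / ((6 * real k + (2-1)) * (6 * real k + 2) * (6 * real k + (2+1))))"
      by (rule sb) simp
    have s4: "summable (\<lambda>k. 1 / ((6 * real k + (4-1)) * (6 * real k + 4) * (6 * real k + (4+1))))"
      by (rule sb) simp
    show ?thesis unfolding Bser_def by (rule suminf_diff[OF s2 s4])
  qed
  also have "(\<lambda>k. 1 / ((6 * real k + (2-1)) * (6 * real k + 2) * (6 * real k + (2+1)))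
       - 1 / ((6 * real k + (4-1)) * (6 * real k + 4) * (6 * real k + (4+1)))) =
     (\<lambda>k. (1/12) * (inverse (1/6 + real k) - inverse (5/6 + real k)) - (1/6) * (inverse (1/3 + real k) - inverse (2/3 + real k)))"
  proof
    fix k
    have i: "inverse (1/6 + real k) = 6 * inverse (6 * real k + 1)" "inverse (5/6 + real k) = 6 * inverse (6 * real k + 5)"
            "inverse (1/3 + real k) = 6 * inverse (6 * real k + 2)" "inverse (2/3 + real k) = 6 * inverse (6 * real k + 4)"
      by (simp_all add: field_simps)
    have q1: "1 / ((6 * real k + (2-1)) * (6 * real k + 2) * (6 * real k + (2+1))) =
       1/2*(1/(6 * real k + 1) - 2/(6 * real k + 2) + 1/(6 * real k + 3))"
      using pf3[of "6 * real k + 1"] by (simp add: add.assoc)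
    have q2: "1 / ((6 * real k + (4-1)) * (6 * real k + 4) * (6 * real k + (4+1))) =
       1/2*(1/(6 * real k + 3) - 2/(6 * real k + 4) + 1/(6 * real k + 5))"
      using pf3[of "6 * real k + 3"] by (simp add: add.assoc)
    show "1 / ((6 * real k + (2-1)) * (6 * real k + 2) * (6 * real k + (2+1)))
       - 1 / ((6 * real k + (4-1)) * (6 * real k + 4) * (6 * real k + (4+1))) =
     (1/12) * (inverse (1/6 + real k) - inverse (5/6 + real k)) - (1/6) * (inverse (1/3 + real k) - inverse (2/3 + real k))"
      unfolding i q1 q2 by (rule lin5)
  qed
  also have "(\<Sum>k. (1/12) * (inverse (1/6 + real k) - inverse (5/6 + real k)) - (1/6) * (inverse (1/3 + real k) - inverse (2/3 + real k)))
     = (1/12) * (Digamma (5/6) - Digamma (1/6)) - (1/6) * (Digamma (2/3) - Digamma (1/3))"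
    by (intro sums_unique[symmetric] sums_diff sums_mult DigDiff) auto
  also have "Digamma (5/6) - Digamma (1/6) = pi * sqrt 3"
    using Dig_refl_real[of "1/6"] by (simp add: cot_def cos_30 sin_30)
  also have "Digamma (2/3) - Digamma (1/3) = pi * sqrt 3 / 3"
  proof -
    have "cot (pi / 3) = sqrt 3 / 3"
      by (simp add: cot_def cos_60 sin_60 field_simps)
    then show ?thesis using Dig_refl_real[of "1/3"] by simp
  qed
  finally show ?thesis by (simp add: field_simps)
qed

lemma Zdiff:
  assumes j: "j \<ge> 1"
  shows "Zser 2 j - Zser 4 j = Lser j / 2^(2*j+1)"
proof -
  define s where "s = 2*j+1"
  have s2: "s \<ge> 2" using j by (simp add: s_def)
  have eqf: "(\<lambda>k. 1 / (6 * real k + 2)^s - 1 / (6 * real k + 4)^s) =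
       (\<lambda>k. (1/2^s) * (1 / (3 * real k + 1)^s - 1 / (3 * real k + 2)^s))"
  proof
    fix k
    have e1: "(6 * real k + 2)^s = 2^s * (3 * real k + 1)^s" 
      by (simp add: power_mult_distrib[symmetric] algebra_simps)
    have e2: "(6 * real k + 4)^s = 2^s * (3 * real k + 2)^s" 
      by (simp add: power_mult_distrib[symmetric] algebra_simps)
    have p: "(3 * real k + 1)^s > 0" "(3 * real k + 2)^s > 0" "(2::real)^s > 0" by auto
    show "1 / (6 * real k + 2)^s - 1 / (6 * real k + 4)^s =
       (1/2^s) * (1 / (3 * real k + 1)^s - 1 / (3 * real k + 2)^s)"
      unfolding e1 e2 using p by (simp add: field_simps)
  qed
  have z2: "summable (\<lambda>k. 1 / (6 * real k + 2)^s)" by (rule sumZ) (use s2 in auto)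
  have z4: "summable (\<lambda>k. 1 / (6 * real k + 4)^s)" by (rule sumZ) (use s2 in auto)
  have sd: "summable (\<lambda>k. 1 / (6 * real k + 2)^s - 1 / (6 * real k + 4)^s)"
    by (rule summable_diff[OF z2 z4])
  have "Zser 2 j - Zser 4 j = (\<Sum>k. 1 / (6 * real k + 2)^s - 1 / (6 * real k + 4)^s)"
    unfolding Zser_def s_def[symmetric] by (rule suminf_diff[OF z2 z4])
  also have "\<dots> = (\<Sum>k. (1/2^s) * (1 / (3 * real k + 1)^s - 1 / (3 * real k + 2)^s))"
    unfolding eqf ..
  also have "\<dots> = (1/2^s) * Lser j"
  proof -
    have "summable (\<lambda>k. (1/2^s) * (1 / (3 * real k + 1)^s - 1 / (3 * real k + 2)^s))"
      using sd unfolding eqf .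
    then have "summable (\<lambda>k. (1 / (3 * real k + 1)^s - 1 / (3 * real k + 2)^s))"
      using summable_cmult_iff[of "1/2^s"] by simp
    then show ?thesis unfolding Lser_def s_def[symmetric] by (rule suminf_mult)
  qed
  finally show ?thesis by (simp add: s_def)
qed

lemma term2:
  assumes j: "j \<ge> 1"
  shows "Zser 2 j - Zser 4 j = sqrt 3 / 3 * ((-1)^(j+1) * pi^(2*j+1) / fact (2*j+1) * bernpoly (2*j+1) (1/3))"
proof -
  have a: "(2*pi)^(2*j) = 2^(2*j) * pi^(2*j)" by (simp add: power_mult_distrib)
  have b: "(2::real)^(2*j+1) = 2 * 2^(2*j)" by simp
  have c: "pi^(2*j+1) = pi * pi^(2*j)" by simp
  have g: "\<And>Q R sg Bn F :: real. Q > 0 \<Longrightarrow> F \<noteq> 0 \<Longrightarrow>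
     (2 * sqrt 3 * pi / 3 * (Q * R) * sg * (Bn / F)) / (2 * Q) = sqrt 3 / 3 * (sg * (pi * R) / F * Bn)"
    by (simp add: field_simps)
  show ?thesis unfolding Zdiff[OF j] L_formula[OF j] a b c by (rule g) auto
qed

lemma part2:
  "Tser 2 p - Tser 4 p = sqrt 3 * pi / 36 - sqrt 3 / 3 * (\<Sum>j=1..p. (-1)^(j+1) * pi^(2*j+1) / fact (2*j+1) * bernpoly (2*j+1) (1/3))"
proof -
  have "Tser 2 p - Tser 4 p = (Bser 2 - Bser 4) - (\<Sum>j=1..p. Zser 2 j - Zser 4 j)"
    using Tser_eq[of 2 p] Tser_eq[of 4 p] by (simp add: sum_subtractf)
  also have "(\<Sum>j=1..p. Zser 2 j - Zser 4 j) = (\<Sum>j=1..p. sqrt 3 / 3 * ((-1)^(j+1) * pi^(2*j+1) / fact (2*j+1) * bernpoly (2*j+1) (1/3)))"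
    by (rule sum.cong) (auto simp: term2)
  finally show ?thesis unfolding base2 sum_distrib_left .
qed

lemma pf3i: fixes a :: real assumes "a > 0"
  shows "1/(a*(a+1)*(a+2)) = 1/2*(inverse a - 2 * inverse (a+1) + inverse (a+2))"
proof -
  have "a \<noteq> 0" "a + 1 \<noteq> 0" "a + 2 \<noteq> 0" using assms by auto
  then show ?thesis by (simp add: divide_simps inverse_eq_divide) (simp add: algebra_simps)
qed

definition Fb :: "nat \<Rightarrow> real" where
  "Fb k = 1 / ((6 * real k + (6-1)) * (6 * real k + 6) * (6 * real k + (6+1)))
     - 1/2 * (1 / ((6 * real k + (8-1)) * (6 * real k + 8) * (6 * real k + (8+1)))
             + 1 / ((6 * real k + (10-1)) * (6 * real k + 10) * (6 * real k + (10+1))))"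

definition eN :: "nat \<Rightarrow> real" where
  "eN N = 1/4 * inverse (6 * real N + 1) + 1/2 * inverse (6 * real N + 2) - 1/2 * inverse (6 * real N + 3)
     + 1/2 * inverse (6 * real N + 4) - 1/4 * inverse (6 * real N + 5)"

lemma harm6: "harm (n + 6) = (harm n :: real) + inverse (real n + 1) + inverse (real n + 2) + inverse (real n + 3)
   + inverse (real n + 4) + inverse (real n + 5) + inverse (real n + 6)"
  by (simp add: harm_Suc numeral_eq_Suc add_ac)
lemma harm3: "harm (n + 3) = (harm n :: real) + inverse (real n + 1) + inverse (real n + 2) + inverse (real n + 3)"
  by (simp add: harm_Suc numeral_eq_Suc add_ac)
lemma harm2: "harm (n + 2) = (harm n :: real) + inverse (real n + 1) + inverse (real n + 2)"
  by (simp add: harm_Suc numeral_eq_Suc add_ac)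
lemma harm1: "harm (n + 1) = (harm n :: real) + inverse (real n + 1)"
  by (simp add: harm_Suc add_ac)

lemma partial_Fb:
  "(\<Sum>k<N. Fb k) = 1/4 * harm (6*N) + 1/8 * harm (3*N) - 1/4 * harm (2*N) - 1/8 * harm N - 49/120 + eN N"
proof (induction N)
  case 0 then show ?case by (simp add: eN_def)
next
  case (Suc N)
  define x where "x = real N"
  have x: "x \<ge> 0" by (simp add: x_def)
  define a where "a r = inverse (6 * x + r)" for r :: real
  have h6: "harm (6 * Suc N) = (harm (6*N) :: real) + a 1 + a 2 + a 3 + a 4 + a 5 + a 6"
    using harm6[of "6*N"] by (simp add: a_def x_def algebra_simps)
  have h3: "harm (3 * Suc N) = (harm (3*N) :: real) + 2 * a 2 + 2 * a 4 + 2 * a 6"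
  proof -
    have "inverse (3 * x + r) = 2 * a (2 * r)" if "r > 0" for r
      using that x by (simp add: a_def field_simps)
    then show ?thesis using harm3[of "3*N"] by (simp add: x_def algebra_simps)
  qed
  have h2: "harm (2 * Suc N) = (harm (2*N) :: real) + 3 * a 3 + 3 * a 6"
  proof -
    have "inverse (2 * x + r) = 3 * a (3 * r)" if "r > 0" for r
      using that x by (simp add: a_def field_simps)
    then show ?thesis using harm2[of "2*N"] by (simp add: x_def algebra_simps)
  qed
  have h1: "harm (Suc N) = (harm N :: real) + 6 * a 6"
  proof -
    have "inverse (x + 1) = 6 * a 6"
      using x by (simp add: a_def field_simps)
    then show ?thesis using harm1[of N] by (simp add: x_def algebra_simps)
  qed
  have e1: "eN (Suc N) = 1/4 * a 7 + 1/2 * a 8 - 1/2 * a 9 + 1/2 * a 10 - 1/4 * a 11"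
    by (simp add: eN_def a_def x_def algebra_simps)
  have e0: "eN N = 1/4 * a 1 + 1/2 * a 2 - 1/2 * a 3 + 1/2 * a 4 - 1/4 * a 5"
    by (simp add: eN_def a_def x_def)
  have f: "Fb N = 1/2 * (a 5 - 2 * a 6 + a 7) - 1/4 * (a 7 - 2 * a 8 + a 9) - 1/4 * (a 9 - 2 * a 10 + a 11)"
  proof -
    have q5: "1 / ((6 * x + 5) * (6 * x + 6) * (6 * x + 7)) = 1/2 * (a 5 - 2 * a 6 + a 7)"
    proof -
      have p: "6*x+5 > 0" using x by simp
      have "1/((6*x+5)*(6*x+5+1)*(6*x+5+2)) = 1/2*(inverse (6*x+5) - 2*inverse(6*x+5+1) + inverse (6*x+5+2))"
        by (rule pf3i[OF p])
      moreover have "6*x+5+1 = 6*x+6" "6*x+5+2 = 6*x+7" by simp_all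
      ultimately show ?thesis unfolding a_def by (simp only:)
    qed
    have q7: "1 / ((6 * x + 7) * (6 * x + 8) * (6 * x + 9)) = 1/2 * (a 7 - 2 * a 8 + a 9)"
    proof -
      have p: "6*x+7 > 0" using x by simp
      have "1/((6*x+7)*(6*x+7+1)*(6*x+7+2)) = 1/2*(inverse (6*x+7) - 2*inverse(6*x+7+1) + inverse (6*x+7+2))"
        by (rule pf3i[OF p])
      moreover have "6*x+7+1 = 6*x+8" "6*x+7+2 = 6*x+9" by simp_all
      ultimately show ?thesis unfolding a_def by (simp only:)
    qed
    have q9: "1 / ((6 * x + 9) * (6 * x + 10) * (6 * x + 11)) = 1/2 * (a 9 - 2 * a 10 + a 11)"
    proof -
      have p: "6*x+9 > 0" using x by simp
      have "1/((6*x+9)*(6*x+9+1)*(6*x+9+2)) = 1/2*(inverse (6*x+9) - 2*inverse(6*x+9+1) + inverse (6*x+9+2))"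
        by (rule pf3i[OF p])
      moreover have "6*x+9+1 = 6*x+10" "6*x+9+2 = 6*x+11" by simp_all
      ultimately show ?thesis unfolding a_def by (simp only:)
    qed
    have "Fb N = 1 / ((6 * x + 5) * (6 * x + 6) * (6 * x + 7)) - 1/2 * (1 / ((6 * x + 7) * (6 * x + 8) * (6 * x + 9))
       + 1 / ((6 * x + 9) * (6 * x + 10) * (6 * x + 11)))" by (simp add: Fb_def x_def)
    then show ?thesis unfolding q5 q7 q9 by (simp add: algebra_simps)
  qed
  show ?case
    unfolding sum.lessThan_Suc Suc.IH h6 h3 h2 h1 e1 e0 f by (simp add: algebra_simps)
qed

lemma harm_lim:
  assumes c: "c > 0"
  shows "(\<lambda>N. harm (c*N) - ln (real c * real N) :: real) \<longlonglongrightarrow> euler_mascheroni"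
proof -
  have "strict_mono (\<lambda>N::nat. c*N)" using c by (auto simp: strict_mono_def)
  from LIMSEQ_subseq_LIMSEQ[OF euler_mascheroni_LIMSEQ this] show ?thesis by (simp add: o_def)
qed

lemma Fb_sums: "Fb sums (3/8 * ln 3 - 49/120)"
proof -
  define g where "g N = 1/4 * (harm (6*N) - ln (real 6 * real N)) + 1/8 * (harm (3*N) - ln (real 3 * real N))
     - 1/4 * (harm (2*N) - ln (real 2 * real N)) - 1/8 * (harm N - ln (real N)) + (3/8 * ln 3 - 49/120) + eN N" for N
  have ev: "eventually (\<lambda>N. g N = (\<Sum>k<N. Fb k)) sequentially"
    using eventually_ge_at_top[of "1::nat"]
  proof eventually_elim
    case (elim N)
    then have Np: "real N > 0" by simp
    have l: "1/4 * ln (6 * real N) + 1/8 * ln (3 * real N) - 1/4 * ln (2 * real N) - 1/8 * ln (real N) = 3/8 * ln 3"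
    proof -
      have "ln (6 * real N) = ln 2 + ln 3 + ln (real N)" "ln (3 * real N) = ln 3 + ln (real N)"
           "ln (2 * real N) = ln 2 + ln (real N)"
        using Np ln_mult[of 6 "real N"] ln_mult[of 2 3] ln_mult[of 3 "real N"] ln_mult[of 2 "real N"] by simp_all
      then show ?thesis by linarith
    qed
    show ?case unfolding partial_Fb g_def of_nat_numeral using l by (simp add: right_diff_distrib)
  qed
  moreover have "g \<longlonglongrightarrow> 1/4 * euler_mascheroni + 1/8 * euler_mascheroni - 1/4 * euler_mascheroni
      - 1/8 * euler_mascheroni + (3/8 * ln 3 - 49/120) + 0"
  proof -
    have e: "eN \<longlonglongrightarrow> 0" unfolding eN_def by real_asymp
    show ?thesis unfolding g_def
      by (intro tendsto_intros harm_lim e euler_mascheroni_LIMSEQ) auto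
  qed
  moreover have "1/4 * euler_mascheroni + 1/8 * euler_mascheroni - 1/4 * euler_mascheroni
      - 1/8 * euler_mascheroni + (3/8 * ln 3 - 49/120) + 0 = (3/8 * ln 3 - 49/120 :: real)"
    by linarith
  ultimately have gl: "g \<longlonglongrightarrow> 3/8 * ln 3 - 49/120" by (simp only:)
  have "(\<lambda>N. \<Sum>k<N. Fb k) \<longlonglongrightarrow> 3/8 * ln 3 - 49/120"
    by (rule Lim_transform_eventually[OF gl ev])
  then show ?thesis unfolding sums_def .
qed

lemma base1: "Bser 6 - (Bser 8 + Bser 10) / 2 = 3/8 * ln 3 - 49/120"
proof -
  have sb: "(\<lambda>k. 1 / ((6 * real k + (r-1)) * (6 * real k + r) * (6 * real k + (r+1)))) sums Bser r" if "r > 1" for r :: real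
    unfolding Bser_def using sumBase[OF that] by (rule summable_sums)
  have "Fb sums (Bser 6 - 1/2 * (Bser 8 + Bser 10))"
    unfolding Fb_def by (intro sums_diff sums_mult sums_add sb) auto
  then have "Bser 6 - 1/2 * (Bser 8 + Bser 10) = 3/8 * ln 3 - 49/120"
    using Fb_sums sums_unique2 by blast
  then show ?thesis by simp
qed

lemma sumZ3:
  assumes r: "r > 0" and s: "s \<ge> 2"
  shows "summable (\<lambda>k. 1 / (3 * real k + r) ^ s)"
proof -
  have "summable (\<lambda>k. inverse ((r/3 + of_nat k) ^ s) :: real)"
    using Polygamma_converges'[of "r/3" s] r s by simp
  then have "summable (\<lambda>k. (1/3^s) * inverse ((r/3 + of_nat k) ^ s) :: real)"
    by (rule summable_mult)
  moreover have "(\<lambda>k. (1/3^s) * inverse ((r/3 + of_nat k) ^ s) :: real) = (\<lambda>k. 1 / (3 * real k + r) ^ s)"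
  proof
    fix k
    have "r/3 + real k = (3 * real k + r) / 3" by simp
    then show "(1/3^s) * inverse ((r/3 + of_nat k) ^ s) = 1 / (3 * real k + r) ^ s"
      by (simp add: power_divide field_simps)
  qed
  ultimately show ?thesis by (simp only:)
qed

lemma sum3: "sum f {(n::nat)*3..<n*3+3} = f (3*n) + f (3*n+1) + f (3*n+2)"
  by (simp add: numeral_3_eq_3 add_ac mult.commute)

lemma zeta_alg:
  fixes P Q z A B :: real
  assumes P: "P > 0" and Q: "Q > 0" and AB: "A + B = z - z / (3*Q)"
  shows "(1/(2*P)) * (z / (3*Q)) - ((1/(2*P)) * (A - 1) + (1/(2*P)) * (B - 1/(2*P))) / 2
     = 1/2 * (1/(2*P) + 1/(4*P^2)) - 1/4 * ((1 - 1/Q) / P * z)"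
proof -
  have B: "B = z - z / (3*Q) - A" using AB by simp
  show ?thesis unfolding B using P Q by (simp add: field_simps power2_eq_square)
qed

lemma zeta_part:
  assumes j: "j \<ge> 1"
  shows "Zser 6 j - (Zser 8 j + Zser 10 j) / 2 =
     1/2 * (1/2^(2*j+1) + 1/4^(2*j+1)) - 1/4 * ((1 - 1/3^(2*j)) / 2^(2*j) * riemann_zeta (2*j+1))"
proof -
  define s where "s = 2*j+1"
  have s2: "s \<ge> 2" using j by (simp add: s_def)
  define A where "A = (\<Sum>k. 1 / (3 * real k + 1) ^ s)"
  define B where "B = (\<Sum>k. 1 / (3 * real k + 2) ^ s)"
  define C where "C = (\<Sum>k. 1 / (3 * real k + 3) ^ s)"
  define z where "z = riemann_zeta s"
  have sA: "summable (\<lambda>k. 1 / (3 * real k + 1) ^ s)" by (rule sumZ3) (use s2 in auto)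
  have sB: "summable (\<lambda>k. 1 / (3 * real k + 2) ^ s)" by (rule sumZ3) (use s2 in auto)
  have sC: "summable (\<lambda>k. 1 / (3 * real k + 3) ^ s)" by (rule sumZ3) (use s2 in auto)
  have zs: "summable (\<lambda>k. 1 / real (k + 1) ^ s)"
    using Polygamma_converges'[of "1::real" s] s2 by (simp add: add.commute divide_inverse)
  have zsum: "(\<lambda>k. 1 / real (k + 1) ^ s) sums z"
    unfolding z_def riemann_zeta_def using zs by (rule summable_sums)
  have "(\<lambda>n. sum (\<lambda>k. 1 / real (k + 1) ^ s) {n*3..<n*3+3}) sums z"
    by (rule sums_group[OF zsum]) simp
  moreover have "(\<lambda>n. sum (\<lambda>k. 1 / real (k + 1) ^ s) {n*3..<n*3+3}) =
      (\<lambda>n. 1 / (3 * real n + 1) ^ s + 1 / (3 * real n + 2) ^ s + 1 / (3 * real n + 3) ^ s)"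
    unfolding sum3 by (simp add: algebra_simps)
  ultimately have "(\<lambda>n. 1 / (3 * real n + 1) ^ s + 1 / (3 * real n + 2) ^ s + 1 / (3 * real n + 3) ^ s) sums z"
    by simp
  moreover have "(\<lambda>n. 1 / (3 * real n + 1) ^ s + 1 / (3 * real n + 2) ^ s + 1 / (3 * real n + 3) ^ s) sums (A + B + C)"
    unfolding A_def B_def C_def by (intro sums_add summable_sums sA sB sC)
  ultimately have zABC: "z = A + B + C" using sums_unique2 by blast
  have C3: "C = z / 3^s"
  proof -
    have "(\<lambda>k. 1 / (3 * real k + 3) ^ s) = (\<lambda>k. (1/3^s) * (1 / real (k + 1) ^ s))"
    proof
      fix k
      have e: "(3 * real k + 3) ^ s = 3^s * real (k+1) ^ s"
        by (simp add: power_mult_distrib[symmetric] algebra_simps)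
      show "1 / (3 * real k + 3) ^ s = (1/3^s) * (1 / real (k + 1) ^ s)"
        by (simp add: e)
    qed
    then have "C = (\<Sum>k. (1/3^s) * (1 / real (k + 1) ^ s))" unfolding C_def by simp
    also have "\<dots> = (1/3^s) * z" unfolding z_def riemann_zeta_def by (rule suminf_mult[OF zs])
    finally show ?thesis by simp
  qed
  have half: "\<And>r::real. (\<lambda>k. 1 / (6 * real k + 2 * r) ^ s) = (\<lambda>k. (1/2^s) * (1 / (3 * real k + r) ^ s))"
  proof
    fix r :: real and k
    have e: "(6 * real k + 2 * r) ^ s = 2^s * (3 * real k + r) ^ s"
      by (simp add: power_mult_distrib[symmetric] algebra_simps)
    show "1 / (6 * real k + 2 * r) ^ s = (1/2^s) * (1 / (3 * real k + r) ^ s)"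
      by (simp add: e)
  qed
  have Z6: "Zser 6 j = (1/2^s) * C"
  proof -
    have "Zser 6 j = (\<Sum>k. 1 / (6 * real k + 2 * 3) ^ s)" unfolding Zser_def s_def by simp
    also have "\<dots> = (1/2^s) * C" unfolding half C_def by (rule suminf_mult[OF sC])
    finally show ?thesis .
  qed
  have sA4: "summable (\<lambda>k. 1 / (3 * real k + 4) ^ s)" by (rule sumZ3) (use s2 in auto)
  have sB5: "summable (\<lambda>k. 1 / (3 * real k + 5) ^ s)" by (rule sumZ3) (use s2 in auto)
  have A4: "(\<Sum>k. 1 / (3 * real k + 4) ^ s) = A - 1"
  proof -
    have "(\<Sum>k. 1 / (3 * real (Suc k) + 1) ^ s) = A - 1 / (3 * real 0 + 1) ^ s"
      unfolding A_def by (rule suminf_split_head[OF sA])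
    moreover have "(\<lambda>k. 1 / (3 * real (Suc k) + 1) ^ s) = (\<lambda>k. 1 / (3 * real k + 4) ^ s)"
      by (simp add: algebra_simps)
    ultimately show ?thesis by simp
  qed
  have B5: "(\<Sum>k. 1 / (3 * real k + 5) ^ s) = B - 1 / 2^s"
  proof -
    have "(\<Sum>k. 1 / (3 * real (Suc k) + 2) ^ s) = B - 1 / (3 * real 0 + 2) ^ s"
      unfolding B_def by (rule suminf_split_head[OF sB])
    moreover have "(\<lambda>k. 1 / (3 * real (Suc k) + 2) ^ s) = (\<lambda>k. 1 / (3 * real k + 5) ^ s)"
      by (simp add: algebra_simps)
    ultimately show ?thesis by simp
  qed
  have Z8: "Zser 8 j = (1/2^s) * (A - 1)"
  proof -
    have "Zser 8 j = (\<Sum>k. 1 / (6 * real k + 2 * 4) ^ s)" unfolding Zser_def s_def by simp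
    also have "\<dots> = (1/2^s) * (\<Sum>k. 1 / (3 * real k + 4) ^ s)" unfolding half by (rule suminf_mult[OF sA4])
    finally show ?thesis unfolding A4 .
  qed
  have Z10: "Zser 10 j = (1/2^s) * (B - 1/2^s)"
  proof -
    have "Zser 10 j = (\<Sum>k. 1 / (6 * real k + 2 * 5) ^ s)" unfolding Zser_def s_def by simp
    also have "\<dots> = (1/2^s) * (\<Sum>k. 1 / (3 * real k + 5) ^ s)" unfolding half by (rule suminf_mult[OF sB5])
    finally show ?thesis unfolding B5 .
  qed
  define P where "P = (2::real)^(2*j)"
  define Q where "Q = (3::real)^(2*j)"
  have P2: "(2::real)^s = 2 * P" "(4::real)^s = 4 * P^2" unfolding P_def s_def
    by (simp_all add: power_mult power2_eq_square power_mult_distrib[symmetric])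
  have Q3: "(3::real)^s = 3 * Q" unfolding Q_def s_def by simp
  have AB: "A + B = z - z / (3*Q)" using zABC C3 Q3 by simp
  have "Zser 6 j - (Zser 8 j + Zser 10 j) / 2 = 1/2 * (1/(2*P) + 1/(4*P^2)) - 1/4 * ((1 - 1/Q) / P * z)"
    unfolding Z6 Z8 Z10 C3 P2 Q3 by (rule zeta_alg) (use AB in \<open>auto simp: P_def Q_def\<close>)
  then show ?thesis using P2 unfolding s_def z_def P_def Q_def by simp
qed

lemma const_sum:
  "(\<Sum>j=1..p. 1/2 * (1/2^(2*j+1) + 1/4^(2*j+1)) :: real) = 1/12 + 1/120 - 1/3 * (1 / 2^(2*p+2)) - 1/15 * (1 / 2^(4*p+3))"
proof (induction p)
  case 0 then show ?case by simp
next
  case (Suc p)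
  have a: "(2::real)^(2*Suc p+1) = 8 * 4^p" "(4::real)^(2*Suc p+1) = 64 * 16^p"
    "(2::real)^(2*Suc p+2) = 16 * 4^p" "(2::real)^(2*p+2) = 4 * 4^p"
    "(2::real)^(4*Suc p+3) = 128 * 16^p" "(2::real)^(4*p+3) = 8 * 16^p"
    by (simp_all add: power_add power_mult)
  have "(4::real)^p > 0" "(16::real)^p > 0" by simp_all
  have st: "(\<Sum>j=1..Suc p. 1/2 * (1/2^(2*j+1) + 1/4^(2*j+1)) :: real) =
     (\<Sum>j=1..p. 1/2 * (1/2^(2*j+1) + 1/4^(2*j+1))) + 1/2 * (1/2^(2*Suc p+1) + 1/4^(2*Suc p+1))"
    by (simp add: sum.cl_ivl_Suc)
  show ?case unfolding st Suc a using \<open>(4::real)^p > 0\<close> \<open>(16::real)^p > 0\<close> by (simp add: field_simps)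
qed

lemma part1:
  "Tser 6 p - 1/2 * (Tser 8 p + Tser 10 p) =
     1/3 * (1 / 2 ^ (2*p+2)) + 1/15 * (1 / 2 ^ (4*p+3)) - 1/2 + 3/8 * ln 3
          + 1/4 * (\<Sum>j=1..p. (1 - 1 / 3 ^ (2*j)) / 2 ^ (2*j) * riemann_zeta (2*j+1))"
proof -
  have ss: "(\<Sum>j=1..p. Zser 6 j - (Zser 8 j + Zser 10 j) / 2) =
      (\<Sum>j=1..p. Zser 6 j) - ((\<Sum>j=1..p. Zser 8 j) + (\<Sum>j=1..p. Zser 10 j)) / 2"
    by (simp add: sum_subtractf sum.distrib sum_divide_distrib[symmetric])
  have "Tser 6 p - 1/2 * (Tser 8 p + Tser 10 p) =
      (Bser 6 - (Bser 8 + Bser 10) / 2) - (\<Sum>j=1..p. Zser 6 j - (Zser 8 j + Zser 10 j) / 2)"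
    unfolding ss using Tser_eq[of 6 p] Tser_eq[of 8 p] Tser_eq[of 10 p] by (simp add: field_simps)
  also have "(\<Sum>j=1..p. Zser 6 j - (Zser 8 j + Zser 10 j) / 2) =
      (\<Sum>j=1..p. 1/2 * (1/2^(2*j+1) + 1/4^(2*j+1)) - 1/4 * ((1 - 1/3^(2*j)) / 2^(2*j) * riemann_zeta (2*j+1)))"
    by (rule sum.cong) (auto simp: zeta_part)
  also have "\<dots> = (\<Sum>j=1..p. 1/2 * (1/2^(2*j+1) + 1/4^(2*j+1))) -
      1/4 * (\<Sum>j=1..p. (1 - 1 / 3 ^ (2*j)) / 2 ^ (2*j) * riemann_zeta (2*j+1))"
    by (simp add: sum_subtractf sum_distrib_left)
  finally show ?thesis unfolding base1 const_sum by simp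
qed

theorem theorem9:
  fixes p :: nat
  shows "((\<Sum>k. 1 / ((6 * real (k+1) - 1) * (6 * real (k+1)) ^ (2*p+1) * (6 * real (k+1) + 1)))
          - 1/2 * ((\<Sum>k. 1 / ((6 * real (k+1) + 1) * (6 * real (k+1) + 2) ^ (2*p+1) * (6 * real (k+1) + 3)))
                 + (\<Sum>k. 1 / ((6 * real (k+1) + 3) * (6 * real (k+1) + 4) ^ (2*p+1) * (6 * real (k+1) + 5))))
        = 1/3 * (1 / 2 ^ (2*p+2)) + 1/15 * (1 / 2 ^ (4*p+3)) - 1/2 + 3/8 * ln 3
          + 1/4 * (\<Sum>j=1..p. (1 - 1 / 3 ^ (2*j)) / 2 ^ (2*j) * riemann_zeta (2*j+1)))
    \<and> ((\<Sum>k. 1 / ((6 * real k + 1) * (6 * real k + 2) ^ (2*p+1) * (6 * real k + 3)))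
          - (\<Sum>k. 1 / ((6 * real k + 3) * (6 * real k + 4) ^ (2*p+1) * (6 * real k + 5)))
        = sqrt 3 * pi / 36
          - sqrt 3 / 3 * (\<Sum>j=1..p. (-1) ^ (j+1) * pi ^ (2*j+1) / fact (2*j+1) * bernpoly (2*j+1) (1/3)))"
proof -
  have e1: "(\<Sum>k. 1 / ((6 * real (k+1) - 1) * (6 * real (k+1)) ^ (2*p+1) * (6 * real (k+1) + 1))) = Tser 6 p"
    unfolding Tser_def by (simp add: algebra_simps)
  have e2: "(\<Sum>k. 1 / ((6 * real (k+1) + 1) * (6 * real (k+1) + 2) ^ (2*p+1) * (6 * real (k+1) + 3))) = Tser 8 p"
    unfolding Tser_def by (simp add: algebra_simps)
  have e3: "(\<Sum>k. 1 / ((6 * real (k+1) + 3) * (6 * real (k+1) + 4) ^ (2*p+1) * (6 * real (k+1) + 5))) = Tser 10 p"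
    unfolding Tser_def by (simp add: algebra_simps)
  have e4: "(\<Sum>k. 1 / ((6 * real k + 1) * (6 * real k + 2) ^ (2*p+1) * (6 * real k + 3))) = Tser 2 p"
    unfolding Tser_def by (simp add: algebra_simps)
  have e5: "(\<Sum>k. 1 / ((6 * real k + 3) * (6 * real k + 4) ^ (2*p+1) * (6 * real k + 5))) = Tser 4 p"
    unfolding Tser_def by (simp add: algebra_simps)
  show ?thesis unfolding e1 e2 e3 e4 e5 using part1 part2 by simp
qed

end
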